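(* For $n\in\mathbb{Z}_S\setminus\{0\}$ let $D_n=\{(\mathbf v^1,\mathbf v^2)\in P(\mathbb{Z}_S^2)\times P(\mathbb{Z}_S^2):\det(\mathbf v^1,\mathbf v^2)=n\}$. Then $D_n$ is invariant under the diagonal action of $\Gamma_2=\mathrm{SL}_2(\mathbb{Z}_S)$ and is the disjoint union of exactly $\varphi(\mathrm d(n))$ distinct $\Gamma_2$-orbits, with representatives $\begin{pmatrix}1&\ell\\0&n\end{pmatrix}$ for $\ell\in\{0,1,\dots,\mathrm d(n)-1\}$ with $\gcd(\ell,\mathrm d(n))=1$.
   Context: $S=\{\infty,p_1,\dots,p_s\}$ with distinct primes, $\mathbb{Z}_S=\mathbb{Z}[p_1^{-1},\dots,p_s^{-1}]$, $P(\mathbb{Z}_S^2)=\mathrm{SL}_2(\mathbb{Z}_S)\mathbf e_1$. Pairs of vectors are viewed as $2\times2$ matrices with those columns. For $n\in\mathbb{Z}_S\setminus\{0\}$, $\mathrm d(n)=\prod_{p\in S}|n|_p$, which equals $|m|$ where $n=m p_1^{k_1}\cdots p_s^{k_s}$ with $m\in\mathbb{Z}$ coprime to $p_1\cdots p_s$. $\varphi$ is Euler's totient function. *)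

theory Defs
  imports "HOL-Number_Theory.Number_Theory"
begin

text \<open>S-integers Z_S = Z[1/p_1,...,1/p_s] as a subset of the rationals;
  S is the finite set of finite primes p_1,...,p_s.\<close>
definition ZS :: "nat set \<Rightarrow> rat set" where
  "ZS S = {q. \<exists>(a::int) (k::nat). q = of_int a / of_nat ((\<Prod>S) ^ k)}"

type_synonym vec2 = "rat \<times> rat"
text \<open>A 2x2 matrix (a,b,c,d) stands for the matrix with rows (a b) and (c d).\<close>
type_synonym mat2 = "rat \<times> rat \<times> rat \<times> rat"

fun mvec :: "mat2 \<Rightarrow> vec2 \<Rightarrow> vec2" where
  "mvec (a, b, c, d) (x, y) = (a * x + b * y, c * x + d * y)"

definition det2 :: "vec2 \<Rightarrow> vec2 \<Rightarrow> rat" where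
  "det2 v w = fst v * snd w - snd v * fst w"

definition SL2 :: "nat set \<Rightarrow> mat2 set" where
  "SL2 S = {(a, b, c, d). a \<in> ZS S \<and> b \<in> ZS S \<and> c \<in> ZS S \<and> d \<in> ZS S \<and> a * d - b * c = 1}"

definition PZS :: "nat set \<Rightarrow> vec2 set" where
  "PZS S = (\<lambda>g. mvec g (1, 0)) ` SL2 S"

definition Dn :: "nat set \<Rightarrow> rat \<Rightarrow> (vec2 \<times> vec2) set" where
  "Dn S n = {(v1, v2). v1 \<in> PZS S \<and> v2 \<in> PZS S \<and> det2 v1 v2 = n}"

definition dact :: "mat2 \<Rightarrow> vec2 \<times> vec2 \<Rightarrow> vec2 \<times> vec2" where
  "dact g vw = (mvec g (fst vw), mvec g (snd vw))"

definition orbit2 :: "nat set \<Rightarrow> vec2 \<times> vec2 \<Rightarrow> (vec2 \<times> vec2) set" where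
  "orbit2 S x = (\<lambda>g. dact g x) ` SL2 S"

definition dS :: "nat set \<Rightarrow> rat \<Rightarrow> nat" where
  "dS S n = (THE m::nat. \<exists>(m'::int) (k::nat \<Rightarrow> int). coprime m' (int (\<Prod>S)) \<and>
      n = of_int m' * (\<Prod>p\<in>S. of_nat p powi k p) \<and> m = nat \<bar>m'\<bar>)"

definition repr :: "rat \<Rightarrow> nat \<Rightarrow> vec2 \<times> vec2" where
  "repr n l = ((1, 0), (of_nat l, n))"

end

theory Submission
  imports Defs
begin


lemma ZS_iff: "q \<in> ZS S \<longleftrightarrow> (\<exists>(a::int) k. q = of_int a / of_nat (\<Prod>S) ^ k)"
  unfolding ZS_def by simp

lemma ZS_add: assumes "0 < \<Prod>S" "q \<in> ZS S" "r \<in> ZS S" shows "q + r \<in> ZS S"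
proof -
  obtain a k where q: "q = of_int a / of_nat (\<Prod>S) ^ k" using assms ZS_iff by blast
  obtain b j where r: "r = of_int b / of_nat (\<Prod>S) ^ j" using assms ZS_iff by blast
  have P: "(of_nat (\<Prod>S)::rat) \<noteq> 0" using assms(1) by (simp del: of_nat_prod)
  have "q + r = of_int (a * int (\<Prod>S)^j + b * int (\<Prod>S)^k) / of_nat (\<Prod>S) ^ (k+j)"
    using P by (simp add: q r field_simps power_add)
  thus ?thesis unfolding ZS_iff by blast
qed

lemma ZS_mult: assumes "0 < \<Prod>S" "q \<in> ZS S" "r \<in> ZS S" shows "q * r \<in> ZS S"
proof -
  obtain a k where q: "q = of_int a / of_nat (\<Prod>S) ^ k" using assms ZS_iff by blast
  obtain b j where r: "r = of_int b / of_nat (\<Prod>S) ^ j" using assms ZS_iff by blast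
  have P: "(of_nat (\<Prod>S)::rat) \<noteq> 0" using assms(1) by (simp del: of_nat_prod)
  have "q * r = of_int (a * b) / of_nat (\<Prod>S) ^ (k+j)"
    using P by (simp add: q r field_simps power_add)
  thus ?thesis unfolding ZS_iff by blast
qed

lemma ZS_uminus: assumes "q \<in> ZS S" shows "- q \<in> ZS S"
proof -
  obtain a k where q: "q = of_int a / of_nat (\<Prod>S) ^ k" using assms ZS_iff by blast
  have "- q = of_int (- a) / of_nat (\<Prod>S) ^ k" by (simp add: q)
  thus ?thesis unfolding ZS_iff by blast
qed

lemma ZS_int [simp]: "of_int a \<in> ZS S"
  unfolding ZS_iff by (rule exI[of _ a], rule exI[of _ 0]) simp

lemma ZS_nat [simp]: "of_nat a \<in> ZS S"
  using ZS_int[of "int a" S] by simp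

lemma ZS_0 [simp]: "0 \<in> ZS S" using ZS_int[of 0 S] by simp
lemma ZS_1 [simp]: "1 \<in> ZS S" using ZS_int[of 1 S] by simp

lemma ZS_diff: assumes "0 < \<Prod>S" "q \<in> ZS S" "r \<in> ZS S" shows "q - r \<in> ZS S"
  using ZS_add[OF assms(1,2) ZS_uminus[OF assms(3)]] by simp

lemma ZS_inv_dvd: assumes "0 < \<Prod>S" "(A::nat) dvd (\<Prod>S)^K" shows "1 / of_nat A \<in> ZS S"
proof -
  obtain C where C: "(\<Prod>S)^K = A * C" using assms by blast
  have "(\<Prod>S)^K \<noteq> 0" using assms(1) by simp
  hence AC: "A \<noteq> 0" "C \<noteq> 0" using C by auto
  have "(of_nat (\<Prod>S) :: rat) ^ K = of_nat A * of_nat C" by (metis C of_nat_mult of_nat_power)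
  hence "1 / (of_nat A :: rat) = of_int (int C) / of_nat (\<Prod>S) ^ K"
    using AC by (simp add: field_simps del: of_nat_prod)
  thus ?thesis unfolding ZS_iff by blast
qed

lemma ZS_clear: assumes "q \<in> ZS S" shows "\<exists>K (z::int). q * of_nat (\<Prod>S) ^ K = of_int z"
proof -
  obtain a k where q: "q = of_int a / of_nat (\<Prod>S) ^ k" using assms ZS_iff by blast
  show ?thesis
  proof (cases "(\<Prod>S) = 0")
    case True then show ?thesis by (intro exI[of _ 1] exI[of _ 0]) simp
  next
    case False
    hence P: "(of_nat (\<Prod>S)::rat) \<noteq> 0" by (simp del: of_nat_prod)
    then show ?thesis by (intro exI[of _ k] exI[of _ a]) (simp add: q)
  qed
qed



fun mmul :: "mat2 \<Rightarrow> mat2 \<Rightarrow> mat2" where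
  "mmul (a, b, c, d) (a', b', c', d') = (a*a' + b*c', a*b' + b*d', c*a' + d*c', c*b' + d*d')"

fun minv :: "mat2 \<Rightarrow> mat2" where
  "minv (a, b, c, d) = (d, -b, -c, a)"

lemma mvec_mmul: "mvec (mmul g h) v = mvec g (mvec h v)"
  by (cases g; cases h; cases v) (simp add: algebra_simps)

lemma dact_mmul: "dact (mmul g h) x = dact g (dact h x)"
  unfolding dact_def by (simp add: mvec_mmul)

lemma mvec_id [simp]: "mvec (1,0,0,1) v = v"
  by (cases v) simp

lemma dact_id [simp]: "dact (1,0,0,1) x = x"
  unfolding dact_def by simp

lemma SL2_id [simp]: "(1,0,0,1) \<in> SL2 S"
  unfolding SL2_def by simp

lemma SL2_mmul: assumes "0 < \<Prod>S" "g \<in> SL2 S" "h \<in> SL2 S" shows "mmul g h \<in> SL2 S"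
proof -
  obtain a b c d where g: "g = (a,b,c,d)" by (cases g) auto
  obtain a' b' c' d' where h: "h = (a',b',c',d')" by (cases h) auto
  have "(a*a' + b*c') * (c*b' + d*d') - (a*b' + b*d') * (c*a' + d*c') = (a*d-b*c)*(a'*d'-b'*c')"
    by (simp add: algebra_simps)
  then show ?thesis using assms unfolding g h SL2_def
    by (auto intro!: ZS_add ZS_mult)
qed

lemma SL2_minv: assumes "g \<in> SL2 S" shows "minv g \<in> SL2 S"
  using assms unfolding SL2_def by (auto intro!: ZS_uminus simp: algebra_simps)

lemma mmul_minv: assumes "g \<in> SL2 S" shows "mmul (minv g) g = (1,0,0,1)" "mmul g (minv g) = (1,0,0,1)"
  using assms unfolding SL2_def by (auto simp: algebra_simps)

lemma orbit2_self: "x \<in> orbit2 S x"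
  unfolding orbit2_def by (rule image_eqI[of _ _ "(1,0,0,1)"]) simp_all

lemma orbit2_eq: assumes "0 < \<Prod>S" "y \<in> orbit2 S x" shows "orbit2 S y = orbit2 S x"
proof -
  obtain g where g: "g \<in> SL2 S" "y = dact g x" using assms unfolding orbit2_def by auto
  show ?thesis
  proof
    show "orbit2 S y \<subseteq> orbit2 S x"
    proof
      fix z assume "z \<in> orbit2 S y"
      then obtain h where "h \<in> SL2 S" "z = dact h y" unfolding orbit2_def by auto
      hence "z = dact (mmul h g) x" "mmul h g \<in> SL2 S" using g assms(1) SL2_mmul by (auto simp: dact_mmul)
      thus "z \<in> orbit2 S x" unfolding orbit2_def by blast
    qed
    show "orbit2 S x \<subseteq> orbit2 S y"
    proof
      fix z assume "z \<in> orbit2 S x"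
      then obtain h where h: "h \<in> SL2 S" "z = dact h x" unfolding orbit2_def by auto
      have "dact (mmul h (minv g)) y = dact h (dact (mmul (minv g) g) x)"
        using g by (simp add: dact_mmul)
      also have "\<dots> = z" using h g by (simp add: mmul_minv)
      finally have "z = dact (mmul h (minv g)) y" ..
      moreover have "mmul h (minv g) \<in> SL2 S" using h g assms(1) SL2_mmul SL2_minv by auto
      ultimately show "z \<in> orbit2 S y" unfolding orbit2_def by blast
    qed
  qed
qed

lemma PZS_iff: "v \<in> PZS S \<longleftrightarrow> (\<exists>a b c d. v = (a, c) \<and> (a,b,c,d) \<in> SL2 S)"
  unfolding PZS_def by force

lemma PZS_mvec: assumes "0 < \<Prod>S" "g \<in> SL2 S" "v \<in> PZS S" shows "mvec g v \<in> PZS S"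
proof -
  obtain h where h: "h \<in> SL2 S" "v = mvec h (1,0)" using assms unfolding PZS_def by auto
  have "mvec g v = mvec (mmul g h) (1,0)" using h by (simp add: mvec_mmul)
  thus ?thesis unfolding PZS_def using SL2_mmul[OF assms(1,2) h(1)] by blast
qed

lemma det2_mvec: "det2 (mvec (a,b,c,d) v) (mvec (a,b,c,d) w) = (a*d - b*c) * det2 v w"
  by (cases v; cases w) (simp add: det2_def algebra_simps)

lemma PZS_ZS: assumes "(x, y) \<in> PZS S" shows "x \<in> ZS S" "y \<in> ZS S"
  using assms unfolding PZS_iff SL2_def by auto



lemma factor_out:
  assumes "finite S" "\<forall>p\<in>S. prime p" "(a::int) \<noteq> 0"
  shows "\<exists>m e. coprime m (int (\<Prod>S)) \<and> a = m * (\<Prod>p\<in>S. int p ^ e p)"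
  using assms
proof (induction S rule: finite_induct)
  case empty then show ?case by (intro exI[of _ a]) simp
next
  case (insert p S)
  have "\<forall>q\<in>S. prime q" using insert.prems(1) by simp
  from insert.IH[OF this insert.prems(2)]
  obtain m e where me: "coprime m (int (\<Prod>S))" "a = m * (\<Prod>q\<in>S. int q ^ e q)"
    by blast
  have pp: "prime (int p)" using insert.prems(1) by simp
  have m0: "m \<noteq> 0"
  proof
    assume "m = 0" with me(2) have "a = 0" by simp
    with insert.prems(2) show False by simp
  qed
  have nu: "\<not> is_unit (int p)" using pp not_prime_unit by blast
  obtain m' where m': "m = int p ^ multiplicity (int p) m * m'" "\<not> int p dvd m'"
    by (rule multiplicity_decompose'[OF m0 nu])
  have c1: "coprime m' (int p)" using prime_imp_coprime[OF pp m'(2)] by (simp add: coprime_commute)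
  have c2: "coprime m' (int (\<Prod>S))"
  proof (rule coprime_divisors[OF _ _ me(1)])
    show "m' dvd m" using m'(1) by (metis dvd_triv_right)
  qed simp
  define e' where "e' = e(p := multiplicity (int p) m)"
  have "(\<Prod>q\<in>insert p S. int q ^ e' q) = int p ^ multiplicity (int p) m * (\<Prod>q\<in>S. int q ^ e q)"
  proof -
    have "(\<Prod>q\<in>S. int q ^ e' q) = (\<Prod>q\<in>S. int q ^ e q)"
      using insert(2) unfolding e'_def by (intro prod.cong) auto
    then show ?thesis using insert(1,2) unfolding e'_def by simp
  qed
  hence "a = m' * (\<Prod>q\<in>insert p S. int q ^ e' q)" using me(2) m'(1) by (simp add: mult_ac)
  moreover have "coprime m' (int (\<Prod>(insert p S)))" using insert(1,2) c1 c2 by simp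
  ultimately show ?case by blast
qed

lemma powi_split:
  assumes "finite S" "\<forall>p\<in>S. prime p"
  shows "\<exists>A B K. 0 < A \<and> 0 < B \<and> A dvd (\<Prod>S)^K \<and> B dvd (\<Prod>S)^K \<and>
     (\<Prod>p\<in>S. (of_nat p::rat) powi k p) = of_nat A / of_nat B"
proof -
  define A where "A = (\<Prod>p\<in>S. p ^ nat (k p))"
  define B where "B = (\<Prod>p\<in>S. p ^ nat (- k p))"
  define K where "K = (\<Sum>p\<in>S. nat (k p) + nat (- k p))"
  have pos: "\<And>p. p\<in>S \<Longrightarrow> 0 < p" using assms(2) prime_gt_0_nat by blast
  have "0 < A" "0 < B" unfolding A_def B_def using pos by (auto intro!: prod_pos)
  have Kle: "nat (k p) + nat (- k p) \<le> K" if "p \<in> S" for p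
    unfolding K_def by (rule member_le_sum[OF that _ assms(1)]) simp
  have "A dvd (\<Prod>S)^K" unfolding A_def prod_power_distrib
  proof (rule prod_dvd_prod)
    fix p assume "p \<in> S"
    show "p ^ nat (k p) dvd p ^ K" using Kle[OF \<open>p \<in> S\<close>] by (intro le_imp_power_dvd) simp
  qed
  moreover have "B dvd (\<Prod>S)^K" unfolding B_def prod_power_distrib
  proof (rule prod_dvd_prod)
    fix p assume "p \<in> S"
    show "p ^ nat (- k p) dvd p ^ K" using Kle[OF \<open>p \<in> S\<close>] by (intro le_imp_power_dvd) simp
  qed
  moreover have "(\<Prod>p\<in>S. (of_nat p::rat) powi k p) = (\<Prod>p\<in>S. (of_nat p::rat) ^ nat (k p) / of_nat p ^ nat (- k p))"
  proof (rule prod.cong)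
    fix p assume "p \<in> S"
    show "(of_nat p::rat) powi k p = of_nat p ^ nat (k p) / of_nat p ^ nat (- k p)"
      by (cases "k p \<ge> 0") (simp_all add: power_int_def power_inverse divide_inverse)
  qed simp
  moreover have "\<dots> = of_nat A / of_nat B" unfolding A_def B_def by (simp add: prod_dividef)
  ultimately show ?thesis using \<open>0 < A\<close> \<open>0 < B\<close> by metis
qed

lemma coprime_dvdP:
  assumes "coprime (m::int) (int (\<Prod>S))" "A dvd (\<Prod>S)^K" shows "coprime m (int A)"
proof (rule coprime_divisors[of m m "int A" "int ((\<Prod>S)^K)"])
  show "int A dvd int ((\<Prod>S)^K)" using assms(2) by (simp only: of_nat_dvd_iff)
  show "coprime m (int ((\<Prod>S)^K))" using assms(1) by (simp only: of_nat_power coprime_power_right_iff) simp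
qed simp

lemma dS_unique:
  assumes "finite S" "\<forall>p\<in>S. prime p" "coprime m1 (int (\<Prod>S))" "coprime m2 (int (\<Prod>S))"
    "(of_int m1::rat) * (\<Prod>p\<in>S. of_nat p powi k1 p) = of_int m2 * (\<Prod>p\<in>S. of_nat p powi k2 p)"
  shows "nat \<bar>m1\<bar> = nat \<bar>m2\<bar>"
proof -
  obtain A1 B1 K1 where 1: "0 < A1" "0 < B1" "A1 dvd (\<Prod>S)^K1" "B1 dvd (\<Prod>S)^K1"
     "(\<Prod>p\<in>S. (of_nat p::rat) powi k1 p) = of_nat A1 / of_nat B1"
    using powi_split[OF assms(1,2), of k1] by blast
  obtain A2 B2 K2 where 2: "0 < A2" "0 < B2" "A2 dvd (\<Prod>S)^K2" "B2 dvd (\<Prod>S)^K2"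
     "(\<Prod>p\<in>S. (of_nat p::rat) powi k2 p) = of_nat A2 / of_nat B2"
    using powi_split[OF assms(1,2), of k2] by blast
  have "(of_int m1::rat) * (of_nat A1 / of_nat B1) = of_int m2 * (of_nat A2 / of_nat B2)"
    using assms(5) 1(5) 2(5) by simp
  hence "(of_int (m1 * int A1 * int B2)::rat) = of_int (m2 * int A2 * int B1)"
    using 1(2) 2(2) by (simp add: field_simps)
  hence eq: "m1 * int A1 * int B2 = m2 * int A2 * int B1" by (simp only: of_int_eq_iff)
  have "m1 dvd m2 * (int A2 * int B1)" using eq by (metis dvd_triv_left mult.assoc)
  moreover have "coprime m1 (int A2 * int B1)"
    using coprime_dvdP[OF assms(3) 2(3)] coprime_dvdP[OF assms(3) 1(4)] by simp
  ultimately have d1: "m1 dvd m2" using coprime_dvd_mult_left_iff by blast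
  have "m2 dvd m1 * (int A1 * int B2)" using eq by (metis dvd_triv_left mult.assoc)
  moreover have "coprime m2 (int A1 * int B2)"
    using coprime_dvdP[OF assms(4) 1(3)] coprime_dvdP[OF assms(4) 2(4)] by simp
  ultimately have d2: "m2 dvd m1" using coprime_dvd_mult_left_iff by blast
  show ?thesis using zdvd_antisym_abs[OF d1 d2] by simp
qed

lemma dS_decomp:
  assumes "finite S" "\<forall>p\<in>S. prime p" "n \<in> ZS S" "n \<noteq> 0"
  shows "\<exists>m k. coprime m (int (\<Prod>S)) \<and> n = of_int m * (\<Prod>p\<in>S. (of_nat p::rat) powi k p) \<and> dS S n = nat \<bar>m\<bar>"
proof -
  obtain a j where a: "n = of_int a / of_nat (\<Prod>S) ^ j" using assms(3) ZS_iff by blast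
  have "a \<noteq> 0" using a assms(4) by auto
  obtain m e where me: "coprime m (int (\<Prod>S))" "a = m * (\<Prod>p\<in>S. int p ^ e p)"
    using factor_out[OF assms(1,2) \<open>a \<noteq> 0\<close>] by blast
  have pos: "\<And>p. p\<in>S \<Longrightarrow> 0 < p" using assms(2) prime_gt_0_nat by blast
  define k where "k = (\<lambda>p. int (e p) - int j)"
  have "(\<Prod>p\<in>S. (of_nat p::rat) powi k p) = (\<Prod>p\<in>S. (of_nat p::rat) ^ e p / of_nat p ^ j)"
  proof (rule prod.cong)
    fix p assume "p \<in> S"
    hence "(of_nat p::rat) \<noteq> 0" using pos by simp
    thus "(of_nat p::rat) powi k p = of_nat p ^ e p / of_nat p ^ j"
      unfolding k_def by (simp add: power_int_diff)
  qed simp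
  also have "\<dots> = (\<Prod>p\<in>S. (of_nat p::rat) ^ e p) / (\<Prod>p\<in>S. (of_nat p::rat)) ^ j"
    by (simp add: prod_dividef prod_power_distrib)
  finally have neq: "n = of_int m * (\<Prod>p\<in>S. (of_nat p::rat) powi k p)"
    unfolding a me(2) by simp
  moreover have "dS S n = nat \<bar>m\<bar>"
    unfolding dS_def
  proof (rule the_equality)
    show "\<exists>m' k. coprime m' (int (\<Prod>S)) \<and> n = of_int m' * (\<Prod>p\<in>S. of_nat p powi k p) \<and> nat \<bar>m\<bar> = nat \<bar>m'\<bar>"
      using me(1) neq by blast
    fix x assume "\<exists>m' k'. coprime m' (int (\<Prod>S)) \<and> n = of_int m' * (\<Prod>p\<in>S. of_nat p powi k' p) \<and> x = nat \<bar>m'\<bar>"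
    then obtain m' k' where "coprime m' (int (\<Prod>S))" "n = of_int m' * (\<Prod>p\<in>S. of_nat p powi k' p)" "x = nat \<bar>m'\<bar>"
      by blast
    thus "x = nat \<bar>m\<bar>" using dS_unique[OF assms(1,2) _ me(1), of m' k' k] neq by simp
  qed
  ultimately show ?thesis using me(1) by blast
qed



lemma P_pos: fixes S :: "nat set" assumes "\<forall>p\<in>S. prime p" shows "0 < \<Prod>S"
proof (rule prod_pos)
  fix p assume "p \<in> S" thus "0 < p" using assms prime_gt_0_nat by blast
qed

lemma dS_unit:
  assumes "finite S" "\<forall>p\<in>S. prime p" "n \<in> ZS S" "n \<noteq> 0"
  shows "\<exists>m u. coprime m (int (\<Prod>S)) \<and> n = of_int m * u \<and> u \<in> ZS S \<and> 1/u \<in> ZS S \<and> dS S n = nat \<bar>m\<bar>"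
proof -
  have P: "0 < \<Prod>S" using P_pos[OF assms(2)] .
  obtain m k where mk: "coprime m (int (\<Prod>S))" "n = of_int m * (\<Prod>p\<in>S. (of_nat p::rat) powi k p)" "dS S n = nat \<bar>m\<bar>"
    using dS_decomp[OF assms] by blast
  obtain A B K where AB: "0 < A" "0 < B" "A dvd (\<Prod>S)^K" "B dvd (\<Prod>S)^K"
     "(\<Prod>p\<in>S. (of_nat p::rat) powi k p) = of_nat A / of_nat B"
    using powi_split[OF assms(1,2), of k] by blast
  have "of_nat A * (1 / of_nat B) \<in> ZS S" using ZS_mult[OF P ZS_nat ZS_inv_dvd[OF P AB(4)]] .
  moreover have "of_nat B * (1 / of_nat A) \<in> ZS S" using ZS_mult[OF P ZS_nat ZS_inv_dvd[OF P AB(3)]] .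
  ultimately have "of_nat A / of_nat B \<in> ZS S" "1 / (of_nat A / of_nat B) \<in> ZS S" by simp_all
  thus ?thesis using mk AB(5) by (intro exI[of _ m] exI[of _ "of_nat A / of_nat B"]) simp
qed

lemma K1:
  assumes "0 < \<Prod>S" "coprime m (int (\<Prod>S))" "z \<in> ZS S" "(of_int x::rat) = of_int m * z"
  shows "m dvd x"
proof -
  obtain K w where w: "z * of_nat (\<Prod>S) ^ K = of_int w" using ZS_clear[OF assms(3)] by blast
  have "(of_int (x * int (\<Prod>S) ^ K)::rat) = of_int (m * w)"
    using assms(4) w by (simp del: of_nat_prod add: mult.assoc)
  hence "x * int (\<Prod>S) ^ K = m * w" by (simp only: of_int_eq_iff)
  hence "m dvd x * int (\<Prod>S) ^ K" by (metis dvd_triv_left)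
  moreover have "coprime m (int (\<Prod>S) ^ K)" using assms(2) by simp
  ultimately show ?thesis using coprime_dvd_mult_left_iff by blast
qed

lemma K2:
  assumes "0 < \<Prod>S" "coprime m (int (\<Prod>S))" "f \<in> ZS S" "g \<in> ZS S"
    "of_int l * f + of_int m * g = (1::rat)"
  shows "coprime l m"
proof -
  obtain a i where a: "f = of_int a / of_nat (\<Prod>S) ^ i" using assms(3) ZS_iff by blast
  obtain b j where b: "g = of_int b / of_nat (\<Prod>S) ^ j" using assms(4) ZS_iff by blast
  have P: "(of_nat (\<Prod>S)::rat) \<noteq> 0" using assms(1) by (simp del: of_nat_prod)
  have "(of_int (l * a * int (\<Prod>S) ^ j + m * b * int (\<Prod>S) ^ i)::rat) = of_int (int (\<Prod>S) ^ (i + j))"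
    using assms(5) P unfolding a b by (simp del: of_nat_prod add: field_simps power_add)
  hence eq: "l * a * int (\<Prod>S) ^ j + m * b * int (\<Prod>S) ^ i = int (\<Prod>S) ^ (i + j)"
    by (simp only: of_int_eq_iff)
  show ?thesis
  proof (rule coprimeI)
    fix c assume c: "c dvd l" "c dvd m"
    have "c dvd l * a * int (\<Prod>S) ^ j + m * b * int (\<Prod>S) ^ i" using c by simp
    hence c1: "c dvd int (\<Prod>S) ^ (i + j)" using eq by simp
    have "coprime m (int (\<Prod>S) ^ (i + j))" using assms(2) by simp
    hence "coprime c c" using coprime_divisors[OF c(2) c1] by simp
    thus "is_unit c" by simp
  qed
qed

lemma K3:
  assumes "0 < \<Prod>S" "coprime m (int (\<Prod>S))" "m \<noteq> 0" "t \<in> ZS S"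
  shows "\<exists>l z. 0 \<le> l \<and> l < \<bar>m\<bar> \<and> z \<in> ZS S \<and> t = of_int l + of_int m * z"
proof -
  obtain a k where a: "t = of_int a / of_nat (\<Prod>S) ^ k" using assms(4) ZS_iff by blast
  have P: "(of_nat (\<Prod>S)::rat) \<noteq> 0" using assms(1) by (simp del: of_nat_prod)
  have cop: "coprime (int (\<Prod>S) ^ k) m" using assms(2) by (simp add: coprime_commute)
  obtain u v where uv: "u * int (\<Prod>S) ^ k + v * m = 1"
    using bezout_int[of "int (\<Prod>S) ^ k" m] cop by auto
  define l where "l = (a * u) mod \<bar>m\<bar>"
  define q where "q = (a * u) div \<bar>m\<bar>"
  have l: "0 \<le> l" "l < \<bar>m\<bar>" unfolding l_def using assms(3) by simp_all
  have "a = a * (u * int (\<Prod>S) ^ k + v * m)" using uv by simp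
  hence e1: "a = a * u * int (\<Prod>S) ^ k + a * v * m" by (simp add: algebra_simps)
  have am: "\<bar>m\<bar> = m * sgn m" by (cases "m < 0") (simp_all add: sgn_if)
  have "a * u = q * \<bar>m\<bar> + l" unfolding l_def q_def by simp
  hence e2: "a * u = m * (sgn m * q) + l" unfolding am by (simp add: algebra_simps)
  define z where "z = of_int (sgn m * q) + of_int (a * v) / (of_nat (\<Prod>S) ^ k :: rat)"
  have zz: "of_int (a * v) / (of_nat (\<Prod>S) ^ k :: rat) \<in> ZS S" unfolding ZS_iff by blast
  have "z \<in> ZS S" unfolding z_def by (intro ZS_add[OF assms(1)] ZS_int zz)
  have r1: "(of_int a :: rat) = of_int (a * u) * of_nat (\<Prod>S) ^ k + of_int (a * v) * of_int m"
    using arg_cong[OF e1, of "of_int :: int \<Rightarrow> rat"] by (simp del: of_nat_prod)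
  have r2: "(of_int (a * u) :: rat) = of_int m * of_int (sgn m * q) + of_int l"
    by (simp add: e2)
  have "t = of_int (a * u) + of_int (a * v) * of_int m / of_nat (\<Prod>S) ^ k"
    unfolding a using P by (subst r1) (simp del: of_nat_prod add: field_simps)
  also have "\<dots> = of_int l + of_int m * z"
    unfolding z_def r2 using P by (simp del: of_nat_prod of_int_mult add: field_simps)
  finally show ?thesis using l \<open>z \<in> ZS S\<close> by blast
qed



lemma cop_nat_int: "coprime (l::nat) (nat \<bar>m\<bar>) \<longleftrightarrow> coprime (int l) m"
  by (rule coprime_nat_abs_right_iff)
lemma card_totient: assumes "0 < d" shows "card {l. l < d \<and> coprime l d} = totient d"
proof (cases "d = 1")
  case True
  hence "{l. l < d \<and> coprime l d} = {0}" by auto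
  thus ?thesis using True by simp
next
  case False
  have "{l. l < d \<and> coprime l d} = totatives d"
  proof safe
    fix l assume "l < d" "coprime l d"
    thus "l \<in> totatives d" using False by (cases "l = 0") (auto simp: totatives_def)
  next
    fix l assume l: "l \<in> totatives d"
    have ld: "l \<le> d" "coprime l d" using l by (simp_all add: totatives_def)
    show "l < d"
    proof (rule ccontr)
      assume "\<not> l < d"
      hence "l = d" using ld(1) by simp
      hence "coprime d d" using ld(2) by simp
      thus False using False by simp
    qed
  next
    fix l assume "l \<in> totatives d"
    thus "coprime l d" by (simp add: totatives_def)
  qed
  thus ?thesis by (simp add: totient_def)
qed



theorem lemma3p1:
  fixes S :: "nat set" and n :: rat
  assumes "finite S" and "\<forall>p\<in>S. prime p"
    and "n \<in> ZS S" and "n \<noteq> 0"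
  shows "(\<forall>g\<in>SL2 S. \<forall>x\<in>Dn S n. dact g x \<in> Dn S n)
    \<and> (\<forall>l. l < dS S n \<and> coprime l (dS S n) \<longrightarrow> repr n l \<in> Dn S n)
    \<and> orbit2 S ` Dn S n = (\<lambda>l. orbit2 S (repr n l)) ` {l. l < dS S n \<and> coprime l (dS S n)}
    \<and> inj_on (\<lambda>l. orbit2 S (repr n l)) {l. l < dS S n \<and> coprime l (dS S n)}
    \<and> card (orbit2 S ` Dn S n) = totient (dS S n)"
proof -
  have P: "0 < \<Prod>S" using P_pos[OF assms(2)] .
  obtain m u where mu: "coprime m (int (\<Prod>S))" "n = of_int m * u" "u \<in> ZS S" "1/u \<in> ZS S"
     "dS S n = nat \<bar>m\<bar>"
    using dS_unit[OF assms] by blast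
  have m0: "m \<noteq> 0" "u \<noteq> 0" using mu(2) assms(4) by auto
  define d where "d = dS S n"
  have dpos: "0 < d" using m0 mu(5) d_def by simp
  have int_d: "int d = \<bar>m\<bar>" using mu(5) d_def by simp
  have cop_d: "coprime l d \<longleftrightarrow> coprime (int l) m" for l
    unfolding d_def mu(5) by (rule cop_nat_int)
  have divu: "z / u \<in> ZS S" if "z \<in> ZS S" for z
    using ZS_mult[OF P that mu(4)] by simp

  have inv: "\<forall>g\<in>SL2 S. \<forall>x\<in>Dn S n. dact g x \<in> Dn S n"
  proof (intro ballI)
    fix g x assume g: "g \<in> SL2 S" and x: "x \<in> Dn S n"
    obtain v w where x': "x = (v, w)" "v \<in> PZS S" "w \<in> PZS S" "det2 v w = n"
      using x unfolding Dn_def by auto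
    obtain a b c e where ge: "g = (a,b,c,e)" by (cases g)
    have "a*e - b*c = 1" using g ge SL2_def by auto
    then have "det2 (mvec g v) (mvec g w) = n" using det2_mvec x' ge by simp
    thus "dact g x \<in> Dn S n" unfolding Dn_def dact_def using PZS_mvec[OF P g] x' by simp
  qed

  have e1: "(1, 0) \<in> PZS S" unfolding PZS_def
    by (rule image_eqI[of _ _ "(1,0,0,1)"]) simp_all

  have rep: "repr n l \<in> Dn S n" if "l < d" "coprime l d" for l
  proof -
    have "coprime (int l) m" using that(2) cop_d by simp
    then obtain x y where xy: "x * int l + y * m = 1"
      using bezout_int[of "int l" m] by auto
    define g :: mat2 where "g = (of_nat l, - (of_int y / u), n, of_int x)"
    have "of_nat l * of_int x - (- (of_int y / u)) * n = (of_int (x * int l + y * m) :: rat)"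
      using m0 mu(2) by (simp add: field_simps)
    also have "\<dots> = 1" using xy by simp
    finally have "g \<in> SL2 S" unfolding g_def SL2_def
      using assms(3) divu[of "of_int y"] by (auto intro: ZS_uminus)
    hence "(of_nat l, n) \<in> PZS S" unfolding PZS_def
      by (rule rev_image_eqI) (simp add: g_def)
    thus ?thesis using e1 unfolding Dn_def repr_def det2_def by simp
  qed

  have red: "\<exists>l. l < d \<and> coprime l d \<and> repr n l \<in> orbit2 S x" if x: "x \<in> Dn S n" for x
  proof -
    obtain v w where x': "x = (v, w)" "v \<in> PZS S" "w \<in> PZS S" "det2 v w = n"
      using x unfolding Dn_def by auto
    obtain a b c e where v: "v = (a, c)" "(a,b,c,e) \<in> SL2 S" using x'(2) PZS_iff by blast
    obtain w1 w2 where w: "w = (w1, w2)" by (cases w)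
    define h where "h = minv (a,b,c,e)"
    have hS: "h \<in> SL2 S" unfolding h_def using SL2_minv[OF v(2)] .
    have det1: "a * e - b * c = 1" using v(2) unfolding SL2_def by simp
    have hv: "mvec h v = (1, 0)" unfolding h_def v using det1 by (simp add: algebra_simps)
    define t where "t = e * w1 - b * w2"
    have hw: "mvec h w = (t, n)" unfolding h_def w t_def using x'(4) unfolding v w det2_def
      by (simp add: algebra_simps)
    have tn: "(t, n) \<in> PZS S" using PZS_mvec[OF P hS x'(3)] hw by simp
    hence tZ: "t \<in> ZS S" using PZS_ZS by blast
    obtain a' b' c' e' where tn': "(t, n) = (a', c')" "(a',b',c',e') \<in> SL2 S"
      using tn PZS_iff by blast
    have b'Z: "b' \<in> ZS S" "e' \<in> ZS S" and det': "t * e' - b' * n = 1"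
      using tn' unfolding SL2_def by auto
    obtain l0 z where lz: "0 \<le> l0" "l0 < \<bar>m\<bar>" "z \<in> ZS S" "t = of_int l0 + of_int m * z"
      using K3[OF P mu(1) m0(1) tZ] by blast
    define g2 :: mat2 where "g2 = (1, - (z / u), 0, 1)"
    have g2S: "g2 \<in> SL2 S" unfolding g2_def SL2_def using divu[OF lz(3)] by (auto intro: ZS_uminus)
    have "mvec g2 (t, n) = (of_int l0, n)" unfolding g2_def using lz(4) mu(2) m0(2)
      by (simp add: field_simps)
    moreover have "mvec g2 (1, 0) = (1, 0)" unfolding g2_def by simp
    ultimately have "dact (mmul g2 h) x = ((1, 0), (of_int l0, n))"
      unfolding dact_def x'(1) using hv hw by (simp add: mvec_mmul)
    also have "\<dots> = repr n (nat l0)" unfolding repr_def using lz(1) by simp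
    finally have inorb: "repr n (nat l0) \<in> orbit2 S x"
      unfolding orbit2_def using SL2_mmul[OF P g2S hS] by (metis image_eqI)
    have "of_int l0 * e' + of_int m * (z * e' - b' * u) = (1::rat)"
      using det' lz(4) mu(2) by (simp add: algebra_simps)
    hence "coprime l0 m"
      using K2[OF P mu(1) b'Z(2), of "z * e' - b' * u" l0] ZS_diff[OF P ZS_mult[OF P lz(3) b'Z(2)] ZS_mult[OF P b'Z(1) mu(3)]]
      by simp
    hence "coprime (nat l0) d" using cop_d lz(1) by simp
    moreover have "nat l0 < d" using lz(1,2) int_d by simp
    ultimately show ?thesis using inorb by blast
  qed

  have injl: "inj_on (\<lambda>l. orbit2 S (repr n l)) {l. l < d \<and> coprime l d}"
  proof (rule inj_onI)
    fix l1 l2 assume l1: "l1 \<in> {l. l < d \<and> coprime l d}" and l2: "l2 \<in> {l. l < d \<and> coprime l d}"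
      and eq: "orbit2 S (repr n l1) = orbit2 S (repr n l2)"
    have "repr n l2 \<in> orbit2 S (repr n l1)" using eq orbit2_self by metis
    then obtain g where g: "g \<in> SL2 S" "dact g (repr n l1) = repr n l2" unfolding orbit2_def by auto
    obtain a b c e where ge: "g = (a,b,c,e)" by (cases g)
    have bZ: "b \<in> ZS S" using g(1) ge SL2_def by auto
    from g(2) have "a = 1" "c = 0" "(of_nat l2::rat) = a * of_nat l1 + b * n"
      unfolding ge repr_def dact_def by auto
    hence "(of_int (int l2 - int l1)::rat) = of_int m * (b * u)" using mu(2) by (simp add: algebra_simps)
    hence md: "m dvd (int l2 - int l1)" using K1[OF P mu(1) ZS_mult[OF P bZ mu(3)]] by blast
    have lt: "\<bar>int l2 - int l1\<bar> < \<bar>m\<bar>"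
    proof -
      have "l1 < d" "l2 < d" using l1 l2 by simp_all
      hence "\<bar>int l2 - int l1\<bar> < int d" by (simp add: abs_less_iff)
      thus ?thesis using int_d by simp
    qed
    have "int l2 - int l1 = 0"
    proof (rule ccontr)
      assume ne: "int l2 - int l1 \<noteq> 0"
      from dvd_imp_le_int[OF ne md] lt show False by simp
    qed
    thus "l1 = l2" by simp
  qed

  have img: "orbit2 S ` Dn S n = (\<lambda>l. orbit2 S (repr n l)) ` {l. l < d \<and> coprime l d}"
  proof
    show "orbit2 S ` Dn S n \<subseteq> (\<lambda>l. orbit2 S (repr n l)) ` {l. l < d \<and> coprime l d}"
    proof
      fix Ob assume "Ob \<in> orbit2 S ` Dn S n"
      then obtain x where x: "x \<in> Dn S n" "Ob = orbit2 S x" by auto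
      obtain l where l: "l < d" "coprime l d" "repr n l \<in> orbit2 S x" using red[OF x(1)] by blast
      have "Ob = orbit2 S (repr n l)" using orbit2_eq[OF P l(3)] x(2) by simp
      thus "Ob \<in> (\<lambda>l. orbit2 S (repr n l)) ` {l. l < d \<and> coprime l d}" using l by blast
    qed
    show "(\<lambda>l. orbit2 S (repr n l)) ` {l. l < d \<and> coprime l d} \<subseteq> orbit2 S ` Dn S n"
    proof
      fix Ob assume "Ob \<in> (\<lambda>l. orbit2 S (repr n l)) ` {l. l < d \<and> coprime l d}"
      then obtain l where l: "l < d" "coprime l d" "Ob = orbit2 S (repr n l)" by auto
      show "Ob \<in> orbit2 S ` Dn S n" unfolding l(3) by (rule imageI, rule rep[OF l(1,2)])
    qed
  qed

  have "card (orbit2 S ` Dn S n) = card {l. l < d \<and> coprime l d}"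
    unfolding img by (rule card_image[OF injl])
  also have "\<dots> = totient d" using card_totient[OF dpos] .
  finally have crd: "card (orbit2 S ` Dn S n) = totient d" .

  have rep': "\<forall>l. l < d \<and> coprime l d \<longrightarrow> repr n l \<in> Dn S n" using rep by blast
  show ?thesis unfolding d_def[symmetric] using inv rep' img injl crd by (intro conjI)
qed


end
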